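(* Consider the symmetrical BSPR network with $K$ relays, i.e., $p_{s,i}=p_s$ and $p_{i,d}=p_d$ for all $i$, with $0\le p_s<1/2$, $0\le p_d<1/2$. Coded transmission with forwarding relays achieves every rate $R<R_\textnormal{coded,f}$, where \[ R_\textnormal{coded,f}=1+Kp\log p+Kq\log q-\sum_{l=0}^{K-1}\binom{K-1}{l}\left(q^lp^{K-l}+q^{K-l}p^l\right)\log\left(q^lp^{K-l}+q^{K-l}p^l\right), \] with $p=p_s(1-p_d)+(1-p_s)p_d$ and $q=1-p$.
   Context: Logarithms are base 2, with $0\log 0=0$. BSPR network: at each network use the source sends $U\in\{0,1\}$; relay $i$ receives $V_i=U\oplus Z_i$, $\Pr\{Z_i=1\}=p_{s,i}$; relay $i$ sends $X_i$ and the destination receives $Y_i=X_i\oplus E_i$, $\Pr\{E_i=1\}=p_{i,d}$; all noises mutually independent and i.i.d. over time. Codes: message $W$ uniform on $\{0,\dots,M-1\}$; source encoder on $W$; relay $i$'s transmission at time $t$ depends only on its past received symbols; destination decodes from all received symbols; rate is $\log_2 M$ per network use; $R$ is achievable if for every $\epsilon>0$ there exist codes of rate at least $R$ and arbitrarily large length with average error probability at most $\epsilon$. A forwarding relay sets $X_i[t]=V_i[t-1]$ ($X_i[1]=0$), giving the effective channel $Y_i=U\oplus Z_i\oplus E_i$. Coded transmission with forwarding relays: all relays forward and the source uses a channel code for the effective point-to-point channel from $U$ to $(Y_1,\dots,Y_K)$ (with $n+1$ network uses for $n$ code symbols), the destination decoding from $(Y_1,\dots,Y_K)$. *)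

theory Defs
  imports "HOL-Probability.Probability"
begin

definition plogp :: "real \<Rightarrow> real" where
  "plogp x = (if x = 0 then 0 else x * log 2 x)"

definition R_coded_f :: "nat \<Rightarrow> real \<Rightarrow> real" where
  "R_coded_f K p = (let q = 1 - p in
     1 + real K * plogp p + real K * plogp q
     - (\<Sum>l<K. real ((K - 1) choose l) * plogp (q ^ l * p ^ (K - l) + q ^ (K - l) * p ^ l)))"

text \<open>i.i.d. Bernoulli(a) noise on network uses t = 0..n (0-indexed) and relays i = 0..K-1;
  True means a bit flip.  Entries outside the index set are False.\<close>
definition noise_pmf :: "nat \<Rightarrow> nat \<Rightarrow> real \<Rightarrow> (nat \<times> nat \<Rightarrow> bool) pmf" where
  "noise_pmf n K a = Pi_pmf ({..n} \<times> {..<K}) False (\<lambda>_. bernoulli_pmf a)"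

text \<open>Source sends U[t] = enc w t; relay i receives V_i[t] = U[t] xor Z(t,i); it transmits
  X_i[0] = 0 and X_i[t] = V_i[t-1]; the destination receives Y_i[t] = X_i[t] xor E(t,i).\<close>
definition fwd_output ::
  "nat \<Rightarrow> nat \<Rightarrow> (nat \<Rightarrow> nat \<Rightarrow> bool) \<Rightarrow> nat \<Rightarrow> (nat \<times> nat \<Rightarrow> bool) \<Rightarrow> (nat \<times> nat \<Rightarrow> bool)
     \<Rightarrow> (nat \<times> nat \<Rightarrow> bool)" where
  "fwd_output n K enc w z e = (\<lambda>(t, i).
     if t \<le> n \<and> i < K then
       ((if t = 0 then False else (enc w (t - 1) \<noteq> z (t - 1, i))) \<noteq> e (t, i))
     else False)"

definition fwd_avg_error ::
  "nat \<Rightarrow> nat \<Rightarrow> real \<Rightarrow> real \<Rightarrow> nat \<Rightarrow> (nat \<Rightarrow> nat \<Rightarrow> bool) \<Rightarrow> ((nat \<times> nat \<Rightarrow> bool) \<Rightarrow> nat) \<Rightarrow> real" where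
  "fwd_avg_error n K ps pd M enc dec =
     (\<Sum>w<M. measure_pmf.prob (pair_pmf (noise_pmf n K ps) (noise_pmf n K pd))
                {(z, e). dec (fwd_output n K enc w z e) \<noteq> w}) / real M"

text \<open>R is achievable by coded transmission with forwarding relays: for every eps > 0 there are
  codes with n code symbols (n+1 network uses) of arbitrarily large length, rate log2 M / (n+1)
  at least R, and average error probability at most eps.\<close>
definition fwd_coded_achievable :: "nat \<Rightarrow> real \<Rightarrow> real \<Rightarrow> real \<Rightarrow> bool" where
  "fwd_coded_achievable K ps pd R \<longleftrightarrow>
     (\<forall>\<epsilon>>0. \<forall>N. \<exists>n M enc dec. N \<le> n \<and> 1 \<le> M \<and>
        R \<le> log 2 (real M) / real (n + 1) \<and> fwd_avg_error n K ps pd M enc dec \<le> \<epsilon>)"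

end

theory Submission
  imports Defs
begin

lemma prob_bind_finite:
  assumes "finite (set_pmf P)"
  shows "measure_pmf.prob (bind_pmf P V) A = (\<Sum>x\<in>set_pmf P. pmf P x * measure_pmf.prob (V x) A)"
proof -
  have "ennreal (measure_pmf.prob (bind_pmf P V) A) = emeasure (measure_pmf (bind_pmf P V)) A"
    by (simp add: measure_pmf.emeasure_eq_measure)
  also have "\<dots> = (\<integral>\<^sup>+x. emeasure (V x) A \<partial>P)" by simp
  also have "\<dots> = (\<Sum>x\<in>set_pmf P. emeasure (V x) A * pmf P x)"
    using assms by (simp add: nn_integral_measure_pmf_finite)
  also have "\<dots> = (\<Sum>x\<in>set_pmf P. ennreal (pmf P x * measure_pmf.prob (V x) A))"
    by (simp add: measure_pmf.emeasure_eq_measure ennreal_mult mult.commute)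
  also have "\<dots> = ennreal (\<Sum>x\<in>set_pmf P. pmf P x * measure_pmf.prob (V x) A)"
    by (rule sum_ennreal) auto
  finally show ?thesis
    by (subst (asm) ennreal_inj) (auto intro!: sum_nonneg)
qed

definition good :: "('x \<Rightarrow> 'y pmf) \<Rightarrow> ('x \<Rightarrow> 'y set) \<Rightarrow> 'y set \<Rightarrow> real \<Rightarrow> ('x \<times> 'y set) list \<Rightarrow> bool" where
  "good V B Ys \<epsilon> cs \<longleftrightarrow>
     (\<forall>j<length cs. snd (cs!j) \<subseteq> B (fst (cs!j)) \<inter> Ys \<and> 1 - \<epsilon> \<le> measure_pmf.prob (V (fst (cs!j))) (snd (cs!j)))
     \<and> (\<forall>i<length cs. \<forall>j<length cs. i \<noteq> j \<longrightarrow> snd (cs!i) \<inter> snd (cs!j) = {})"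

lemma good_Nil: "good V B Ys \<epsilon> []" by (simp add: good_def)

lemma good_len:
  assumes "finite Ys" "\<epsilon> < 1" "good V B Ys \<epsilon> cs"
  shows "length cs \<le> card Ys"
proof -
  have ne: "snd (cs!j) \<noteq> {}" if "j < length cs" for j
  proof
    assume "snd (cs!j) = {}"
    with assms(3) that have "1 - \<epsilon> \<le> 0" by (auto simp: good_def)
    with assms(2) show False by simp
  qed
  define f where "f j = (SOME y. y \<in> snd (cs!j))" for j
  have f: "f j \<in> snd (cs!j)" if "j < length cs" for j
    using ne[OF that] unfolding f_def by (auto intro: someI)
  have "inj_on f {..<length cs}"
  proof (rule inj_onI)
    fix i j assume "i \<in> {..<length cs}" "j \<in> {..<length cs}" "f i = f j"
    from \<open>i \<in> _\<close> \<open>j \<in> _\<close> have "i < length cs" "j < length cs" by auto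
    show "i = j"
    proof (rule ccontr)
      assume "i \<noteq> j"
      with assms(3) \<open>i < length cs\<close> \<open>j < length cs\<close> have "snd (cs!i) \<inter> snd (cs!j) = {}"
        by (simp add: good_def)
      with f[OF \<open>i < length cs\<close>] f[OF \<open>j < length cs\<close>] \<open>f i = f j\<close> show False by auto
    qed
  qed
  moreover have "f ` {..<length cs} \<subseteq> Ys" using f assms(3) by (auto simp: good_def)
  ultimately have "card {..<length cs} \<le> card Ys"
    using card_inj_on_le assms(1) by blast
  thus ?thesis by simp
qed

lemma good_snoc:
  assumes g: "good V B Ys \<epsilon> cs" and E: "E \<subseteq> B x \<inter> Ys" and D: "E \<inter> \<Union>(snd ` set cs) = {}"
    and pr: "1 - \<epsilon> \<le> measure_pmf.prob (V x) E"
  shows "good V B Ys \<epsilon> (cs @ [(x,E)])"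
proof -
  let ?c = "cs @ [(x,E)]"
  have nth: "?c ! j = (if j < length cs then cs ! j else (x,E))" if "j < length ?c" for j
    using that by (auto simp: nth_append)
  have A: "snd (?c!j) \<subseteq> B (fst (?c!j)) \<inter> Ys \<and> 1 - \<epsilon> \<le> measure_pmf.prob (V (fst (?c!j))) (snd (?c!j))"
    if "j < length ?c" for j
  proof (cases "j < length cs")
    case True thus ?thesis using g nth[OF that] unfolding good_def by simp
  next
    case False thus ?thesis using E pr nth[OF that] by simp
  qed
  have Bd: "snd (?c!i) \<inter> snd (?c!j) = {}" if "i < length ?c" "j < length ?c" "i \<noteq> j" for i j
  proof -
    have mem: "snd (cs!k) \<subseteq> \<Union>(snd ` set cs)" if "k < length cs" for k
    proof -
      have "cs!k \<in> set cs" using that by simp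
      thus ?thesis by blast
    qed
    consider "i < length cs" "j < length cs" | "i < length cs" "\<not> j < length cs"
      | "\<not> i < length cs" "j < length cs" | "\<not> i < length cs" "\<not> j < length cs" by blast
    thus ?thesis
    proof cases
      case 1 thus ?thesis using g that nth[OF that(1)] nth[OF that(2)] unfolding good_def by simp
    next
      case 2 thus ?thesis using D mem[OF 2(1)] nth[OF that(1)] nth[OF that(2)] by auto
    next
      case 3 thus ?thesis using D mem[OF 3(2)] nth[OF that(1)] nth[OF that(2)] by auto
    next
      case 4 thus ?thesis using that by simp
    qed
  qed
  show ?thesis unfolding good_def using A Bd by blast
qed

lemma feinstein:
  fixes P :: "'x pmf" and V :: "'x \<Rightarrow> 'y pmf"
  assumes fin: "finite Ys" and sup: "\<And>x. set_pmf (V x) \<subseteq> Ys" and finP: "finite (set_pmf P)"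
    and Bq: "\<And>x. measure_pmf.prob (bind_pmf P V) (B x) \<le> \<gamma>"
    and \<epsilon>: "0 < \<epsilon>" "\<epsilon> < 1"
  shows "\<exists>xs dec. \<epsilon> - (\<Sum>x\<in>set_pmf P. pmf P x * measure_pmf.prob (V x) (- B x)) \<le> real (length xs) * \<gamma>
            \<and> (\<forall>j<length xs. measure_pmf.prob (V (xs!j)) {y. dec y \<noteq> j} \<le> \<epsilon>)"
proof -
  let ?L = "length ` {cs. good V B Ys \<epsilon> cs}"
  have Lsub: "?L \<subseteq> {..card Ys}" using good_len[OF fin \<epsilon>(2)] by auto
  hence finL: "finite ?L" by (rule finite_subset) simp
  have "length ([]::('x \<times> 'y set) list) \<in> ?L" using good_Nil[of V B Ys \<epsilon>] by blast
  hence "Max ?L \<in> ?L" using finL by (intro Max_in) auto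
  then obtain cs where cs: "good V B Ys \<epsilon> cs" and csl: "length cs = Max ?L" by auto
  have csmax: "length cs' \<le> length cs" if "good V B Ys \<epsilon> cs'" for cs'
    unfolding csl using finL that by (intro Max_ge) auto
  define D where "D = \<Union>(snd ` set cs)"
  have maxl: "measure_pmf.prob (V x) (B x - D) < 1 - \<epsilon>" for x
  proof (rule ccontr)
    assume "\<not> ?thesis"
    hence a: "1 - \<epsilon> \<le> measure_pmf.prob (V x) (B x - D)" by simp
    define E where "E = B x \<inter> Ys - D"
    have "measure_pmf.prob (V x) (B x - D) = measure_pmf.prob (V x) ((B x - D) \<inter> set_pmf (V x))"
      by (simp add: measure_Int_set_pmf)
    also have "\<dots> \<le> measure_pmf.prob (V x) E"
      using sup[of x] by (intro measure_pmf.finite_measure_mono) (auto simp: E_def)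
    finally have "good V B Ys \<epsilon> (cs @ [(x,E)])"
      using a by (intro good_snoc[OF cs]) (auto simp: E_def D_def)
    from csmax[OF this] show False by simp
  qed
  have each: "\<epsilon> - measure_pmf.prob (V x) D \<le> measure_pmf.prob (V x) (- B x)" for x
  proof -
    have "measure_pmf.prob (V x) (B x) \<le> measure_pmf.prob (V x) (D \<union> (B x - D))"
      by (intro measure_pmf.finite_measure_mono) auto
    also have "\<dots> \<le> measure_pmf.prob (V x) D + measure_pmf.prob (V x) (B x - D)"
      by (intro measure_Un_le) auto
    finally have "measure_pmf.prob (V x) (B x) \<le> measure_pmf.prob (V x) D + (1 - \<epsilon>)"
      using maxl[of x] by simp
    moreover have "measure_pmf.prob (V x) (- B x) = 1 - measure_pmf.prob (V x) (B x)"
      using measure_pmf.prob_compl[of "B x" "V x"] by (simp add: Compl_eq_Diff_UNIV)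
    ultimately show ?thesis by simp
  qed
  have sum1: "(\<Sum>x\<in>set_pmf P. pmf P x) = 1"
    using finP by (simp add: sum_pmf_eq_1)
  have "\<epsilon> - (\<Sum>x\<in>set_pmf P. pmf P x * measure_pmf.prob (V x) (- B x))
        = (\<Sum>x\<in>set_pmf P. pmf P x * (\<epsilon> - measure_pmf.prob (V x) (- B x)))"
    using sum1 by (simp add: algebra_simps sum_subtractf sum_distrib_left[symmetric])
  also have "\<dots> \<le> (\<Sum>x\<in>set_pmf P. pmf P x * measure_pmf.prob (V x) D)"
    using each by (intro sum_mono mult_left_mono) (auto simp: diff_le_eq add.commute)
  also have "\<dots> = measure_pmf.prob (bind_pmf P V) D"
    using finP by (simp add: prob_bind_finite)
  also have "D = (\<Union>j\<in>{..<length cs}. snd (cs!j))"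
  proof -
    have "set cs = (\<lambda>i. cs!i) ` {..<length cs}" by (auto simp: set_conv_nth)
    thus ?thesis unfolding D_def by (simp add: image_image)
  qed
  also have "measure_pmf.prob (bind_pmf P V) \<dots> \<le> (\<Sum>j<length cs. measure_pmf.prob (bind_pmf P V) (snd (cs!j)))"
    by (intro measure_pmf.finite_measure_subadditive_finite) auto
  also have "\<dots> \<le> (\<Sum>j<length cs. \<gamma>)"
  proof (intro sum_mono)
    fix j assume "j \<in> {..<length cs}"
    hence "snd (cs!j) \<subseteq> B (fst (cs!j))" using cs by (auto simp: good_def)
    hence "measure_pmf.prob (bind_pmf P V) (snd (cs!j)) \<le> measure_pmf.prob (bind_pmf P V) (B (fst (cs!j)))"
      by (intro measure_pmf.finite_measure_mono) auto
    also have "\<dots> \<le> \<gamma>" by (rule Bq)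
    finally show "measure_pmf.prob (bind_pmf P V) (snd (cs!j)) \<le> \<gamma>" .
  qed
  also have "\<dots> = real (length (map fst cs)) * \<gamma>" by simp
  finally have rate: "\<epsilon> - (\<Sum>x\<in>set_pmf P. pmf P x * measure_pmf.prob (V x) (- B x)) \<le> real (length (map fst cs)) * \<gamma>" .
  define dec where "dec y = (LEAST j. j < length cs \<and> y \<in> snd (cs!j))" for y
  have err: "measure_pmf.prob (V (map fst cs ! j)) {y. dec y \<noteq> j} \<le> \<epsilon>" if j: "j < length (map fst cs)" for j
  proof -
    have "{y. dec y \<noteq> j} \<subseteq> - snd (cs!j)"
    proof
      fix y assume y: "y \<in> {y. dec y \<noteq> j}"
      show "y \<in> - snd (cs!j)"
      proof
        assume yin: "y \<in> snd (cs!j)"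
        have "dec y = j" unfolding dec_def
        proof (rule Least_equality)
          show "j < length cs \<and> y \<in> snd (cs!j)" using j yin by simp
        next
          fix i assume i: "i < length cs \<and> y \<in> snd (cs!i)"
          show "j \<le> i"
          proof (rule ccontr)
            assume "\<not> j \<le> i"
            hence "i \<noteq> j" by simp
            with cs i j have "snd (cs!i) \<inter> snd (cs!j) = {}" by (simp add: good_def)
            with i yin show False by auto
          qed
        qed
        with y show False by simp
      qed
    qed
    hence "measure_pmf.prob (V (fst (cs!j))) {y. dec y \<noteq> j} \<le> measure_pmf.prob (V (fst (cs!j))) (- snd (cs!j))"
      by (intro measure_pmf.finite_measure_mono) auto
    also have "\<dots> = 1 - measure_pmf.prob (V (fst (cs!j))) (snd (cs!j))"
      using measure_pmf.prob_compl[of "snd (cs!j)" "V (fst (cs!j))"] by (simp add: Compl_eq_Diff_UNIV)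
    also have "\<dots> \<le> \<epsilon>" using cs j by (auto simp: good_def)
    finally show ?thesis using j by simp
  qed
  show ?thesis using rate err by blast
qed

lemma Pi_pmf_map_dep:
  assumes "finite A"
  shows "Pi_pmf A d' (\<lambda>t. map_pmf (g t) (P t)) = map_pmf (\<lambda>h t. if t \<in> A then g t (h t) else d') (Pi_pmf A d P)"
proof -
  have "Pi_pmf A d' (\<lambda>t. map_pmf (g t) (P t)) = Pi_pmf A d' (\<lambda>t. bind_pmf (P t) (\<lambda>v. return_pmf (g t v)))"
    by (simp add: map_pmf_def)
  also have "\<dots> = bind_pmf (Pi_pmf A d P) (\<lambda>h. Pi_pmf A d' (\<lambda>t. return_pmf (g t (h t))))"
    using assms by (rule Pi_pmf_bind)
  also have "\<dots> = bind_pmf (Pi_pmf A d P) (\<lambda>h. return_pmf (\<lambda>t. if t \<in> A then g t (h t) else d'))"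
    using assms by simp
  also have "\<dots> = map_pmf (\<lambda>h t. if t \<in> A then g t (h t) else d') (Pi_pmf A d P)"
    by (simp add: map_pmf_def)
  finally show ?thesis .
qed

definition Pn :: "nat \<Rightarrow> (nat \<Rightarrow> bool) pmf" where "Pn n = Pi_pmf {..<n} False (\<lambda>_. bernoulli_pmf (1/2))"
definition Vn :: "(bool \<Rightarrow> nat pmf) \<Rightarrow> nat \<Rightarrow> (nat \<Rightarrow> bool) \<Rightarrow> (nat \<Rightarrow> nat) pmf" where "Vn W n x = Pi_pmf {..<n} (0::nat) (\<lambda>t. W (x t))"
definition Q1 :: "(bool \<Rightarrow> nat pmf) \<Rightarrow> nat pmf" where "Q1 W = bind_pmf (bernoulli_pmf (1/2)) W"
definition J1 :: "(bool \<Rightarrow> nat pmf) \<Rightarrow> (bool \<times> nat) pmf" where "J1 W = bind_pmf (bernoulli_pmf (1/2)) (\<lambda>u. map_pmf (Pair u) (W u))"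
definition idens :: "(bool \<Rightarrow> nat pmf) \<Rightarrow> bool \<times> nat \<Rightarrow> real" where "idens W = (\<lambda>(u,d). log 2 (pmf (W u) d / pmf (Q1 W) d))"
definition JJ :: "(bool \<Rightarrow> nat pmf) \<Rightarrow> nat \<Rightarrow> (nat \<Rightarrow> bool \<times> nat) pmf" where "JJ W n = Pi_pmf {..<n} (False,0) (\<lambda>_. J1 W)"
definition Qn :: "(bool \<Rightarrow> nat pmf) \<Rightarrow> nat \<Rightarrow> (nat \<Rightarrow> nat) pmf" where "Qn W n = Pi_pmf {..<n} (0::nat) (\<lambda>_. Q1 W)"
definition Bset :: "(bool \<Rightarrow> nat pmf) \<Rightarrow> nat \<Rightarrow> real \<Rightarrow> (nat \<Rightarrow> bool) \<Rightarrow> (nat \<Rightarrow> nat) set" where "Bset W n T x = {y. 2 powr T * pmf (Qn W n) y < pmf (Vn W n x) y}"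

lemma bind_Pn_Vn: "bind_pmf (Pn n) (Vn W n) = Qn W n"
  unfolding Pn_def Vn_def Qn_def Q1_def
  by (rule Pi_pmf_bind[symmetric]) simp

lemma finite_set_Pn: "finite (set_pmf (Pn n))"
  unfolding Pn_def by (subst set_Pi_pmf) auto

lemma finite_set_Vn:
  assumes "\<And>u. finite (set_pmf (W u))"
  shows "set_pmf (Vn W n x) \<subseteq> PiE_dflt {..<n} 0 (\<lambda>_. set_pmf (W True) \<union> set_pmf (W False))"
    and "finite (PiE_dflt {..<n} (0::nat) (\<lambda>_. set_pmf (W True) \<union> set_pmf (W False)))"
proof -
  show "set_pmf (Vn W n x) \<subseteq> PiE_dflt {..<n} 0 (\<lambda>_. set_pmf (W True) \<union> set_pmf (W False))"
  proof -
    have *: "set_pmf (W (x t)) \<subseteq> set_pmf (W True) \<union> set_pmf (W False)" for t by (cases "x t") auto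
    show ?thesis unfolding Vn_def
      by (subst set_Pi_pmf) (simp, use * in \<open>fastforce simp: PiE_dflt_def\<close>)
  qed
  show "finite (PiE_dflt {..<n} (0::nat) (\<lambda>_. set_pmf (W True) \<union> set_pmf (W False)))"
    using assms by (intro finite_PiE_dflt) auto
qed

lemma prob_ratio_set:
  assumes "finite (set_pmf V)" "c > 0"
  shows "measure_pmf.prob Q {y. c * pmf Q y < pmf V y} \<le> 1 / c"
proof -
  define S where "S = {y. c * pmf Q y < pmf V y}"
  have sub: "S \<subseteq> set_pmf V"
  proof
    fix y assume "y \<in> S"
    hence "c * pmf Q y < pmf V y" by (simp add: S_def)
    moreover have "0 \<le> c * pmf Q y" using assms(2) by simp
    ultimately have "pmf V y \<noteq> 0" by linarith
    thus "y \<in> set_pmf V" by (simp add: set_pmf_iff)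
  qed
  hence fin: "finite S" using assms(1) finite_subset by blast
  have "measure_pmf.prob Q S = (\<Sum>y\<in>S. pmf Q y)" using fin by (simp add: measure_measure_pmf_finite)
  also have "\<dots> \<le> (\<Sum>y\<in>S. pmf V y / c)"
    using assms(2) by (intro sum_mono) (auto simp: S_def field_simps)
  also have "\<dots> = measure_pmf.prob V S / c"
    using fin by (simp add: measure_measure_pmf_finite sum_divide_distrib)
  also have "\<dots> \<le> 1 / c" using assms(2) by (intro divide_right_mono) auto
  finally show ?thesis unfolding S_def .
qed

lemma Bset_prob:
  assumes "\<And>u. finite (set_pmf (W u))"
  shows "measure_pmf.prob (bind_pmf (Pn n) (Vn W n)) (Bset W n T x) \<le> 2 powr (-T)"
proof -
  have "finite (set_pmf (Vn W n x))"
    by (rule finite_subset[OF finite_set_Vn(1)[OF assms] finite_set_Vn(2)[OF assms]])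
  from prob_ratio_set[OF this, of "2 powr T" "Qn W n"]
  show ?thesis unfolding bind_Pn_Vn Bset_def by (simp add: powr_minus_divide)
qed

lemma set_J1: "(u,d) \<in> set_pmf (J1 W) \<Longrightarrow> d \<in> set_pmf (W u)"
  unfolding J1_def by (auto simp: set_bind_pmf)

lemma pmf_Q1_pos: "d \<in> set_pmf (W u) \<Longrightarrow> pmf (Q1 W) d > 0"
proof -
  assume "d \<in> set_pmf (W u)"
  hence "d \<in> set_pmf (Q1 W)" unfolding Q1_def by (auto simp: set_bind_pmf set_pmf_bernoulli)
  thus ?thesis by (simp add: pmf_positive)
qed

lemma JJ_eq:
  "map_pmf (\<lambda>f. (\<lambda>t. fst (f t), \<lambda>t. snd (f t))) (JJ W n) = bind_pmf (Pn n) (\<lambda>x. map_pmf (Pair x) (Vn W n x))"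
proof -
  have "JJ W n = bind_pmf (Pn n) (\<lambda>x. Pi_pmf {..<n} (False,0) (\<lambda>t. map_pmf (Pair (x t)) (W (x t))))"
    unfolding JJ_def J1_def Pn_def by (rule Pi_pmf_bind) simp
  also have "\<dots> = bind_pmf (Pn n) (\<lambda>x. map_pmf (\<lambda>h t. if t \<in> {..<n} then (x t, h t) else (False,0)) (Vn W n x))"
    unfolding Vn_def by (subst Pi_pmf_map_dep) auto
  finally have "map_pmf (\<lambda>f. (\<lambda>t. fst (f t), \<lambda>t. snd (f t))) (JJ W n)
     = bind_pmf (Pn n) (\<lambda>x. map_pmf ((\<lambda>f. (\<lambda>t. fst (f t), \<lambda>t. snd (f t))) \<circ> (\<lambda>h t. if t \<in> {..<n} then (x t, h t) else (False,0))) (Vn W n x))"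
    by (simp add: map_bind_pmf pmf.map_comp)
  also have "\<dots> = bind_pmf (Pn n) (\<lambda>x. map_pmf (Pair x) (Vn W n x))"
  proof (intro bind_pmf_cong refl map_pmf_cong)
    fix x h assume x: "x \<in> set_pmf (Pn n)" and h: "h \<in> set_pmf (Vn W n x)"
    have "x t = False" if "t \<ge> n" for t
      using x that set_Pi_pmf_subset[of "{..<n}" False "\<lambda>_. bernoulli_pmf (1/2)"] unfolding Pn_def by auto
    moreover have "h t = 0" if "t \<ge> n" for t
      using h that set_Pi_pmf_subset[of "{..<n}" 0 "\<lambda>t. W (x t)"] unfolding Vn_def by auto
    ultimately show "((\<lambda>f. (\<lambda>t. fst (f t), \<lambda>t. snd (f t))) \<circ> (\<lambda>h t. if t \<in> {..<n} then (x t, h t) else (False,0))) h = (x, h)"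
      by (auto simp: fun_eq_iff not_less)
  qed
  finally show ?thesis .
qed

lemma JJ_supp:
  assumes "f \<in> set_pmf (JJ W n)"
  shows "\<And>t. t < n \<Longrightarrow> f t \<in> set_pmf (J1 W)" and "\<And>t. \<not> t < n \<Longrightarrow> f t = (False, 0)"
  using assms unfolding JJ_def by (subst (asm) set_Pi_pmf; auto simp: PiE_dflt_def)+

lemma a_bound:
  assumes fin: "\<And>u. finite (set_pmf (W u))"
  shows "(\<Sum>x\<in>set_pmf (Pn n). pmf (Pn n) x * measure_pmf.prob (Vn W n x) (- Bset W n T x))
          \<le> measure_pmf.prob (JJ W n) {f. (\<Sum>t<n. idens W (f t)) \<le> T}"
proof -
  define g where "g = (\<lambda>f::nat \<Rightarrow> bool \<times> nat. (\<lambda>t. fst (f t), \<lambda>t. snd (f t)))"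
  define S where "S = {(x,y). y \<notin> Bset W n T x}"
  have "(\<Sum>x\<in>set_pmf (Pn n). pmf (Pn n) x * measure_pmf.prob (Vn W n x) (- Bset W n T x))
      = (\<Sum>x\<in>set_pmf (Pn n). pmf (Pn n) x * measure_pmf.prob (map_pmf (Pair x) (Vn W n x)) S)"
  proof (intro sum.cong refl)
    fix x
    have "Pair x -` S = - Bset W n T x" by (auto simp: S_def)
    thus "pmf (Pn n) x * measure_pmf.prob (Vn W n x) (- Bset W n T x) =
          pmf (Pn n) x * measure_pmf.prob (map_pmf (Pair x) (Vn W n x)) S"
      by (simp add: measure_map_pmf)
  qed
  also have "\<dots> = measure_pmf.prob (bind_pmf (Pn n) (\<lambda>x. map_pmf (Pair x) (Vn W n x))) S"
    by (simp add: prob_bind_finite finite_set_Pn)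
  also have "\<dots> = measure_pmf.prob (map_pmf g (JJ W n)) S"
    unfolding g_def by (simp add: JJ_eq)
  also have "\<dots> = measure_pmf.prob (JJ W n) (g -` S \<inter> set_pmf (JJ W n))"
    by (simp add: measure_map_pmf measure_Int_set_pmf)
  also have "\<dots> \<le> measure_pmf.prob (JJ W n) {f. (\<Sum>t<n. idens W (f t)) \<le> T}"
  proof (rule measure_pmf.finite_measure_mono, rule subsetI)
    fix f assume fS: "f \<in> g -` S \<inter> set_pmf (JJ W n)"
    hence fJ: "f \<in> set_pmf (JJ W n)" by simp
    define a where "a t = pmf (W (fst (f t))) (snd (f t))" for t
    define b where "b t = pmf (Q1 W) (snd (f t))" for t
    have inW: "snd (f t) \<in> set_pmf (W (fst (f t)))" if "t < n" for t
      using set_J1[of "fst (f t)" "snd (f t)" W] JJ_supp(1)[OF fJ that] by simp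
    have apos: "a t > 0" if "t < n" for t
      using inW[OF that] unfolding a_def by (simp add: pmf_positive)
    have bpos: "b t > 0" if "t < n" for t
      using pmf_Q1_pos[of "snd (f t)" W "fst (f t)"] inW[OF that] unfolding b_def by simp
    have pV: "pmf (Vn W n (\<lambda>t. fst (f t))) (\<lambda>t. snd (f t)) = (\<Prod>t<n. a t)"
      unfolding Vn_def a_def using JJ_supp(2)[OF fJ] by (subst pmf_Pi') auto
    have pQ: "pmf (Qn W n) (\<lambda>t. snd (f t)) = (\<Prod>t<n. b t)"
      unfolding Qn_def b_def using JJ_supp(2)[OF fJ] by (subst pmf_Pi') auto
    from fS have "\<not> 2 powr T * pmf (Qn W n) (\<lambda>t. snd (f t)) < pmf (Vn W n (\<lambda>t. fst (f t))) (\<lambda>t. snd (f t))"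
      by (simp add: g_def S_def Bset_def)
    hence le: "(\<Prod>t<n. a t) \<le> 2 powr T * (\<Prod>t<n. b t)" using pV pQ by simp
    have Pa: "(\<Prod>t<n. a t) > 0" using apos by (intro prod_pos) auto
    have Pb: "(\<Prod>t<n. b t) > 0" using bpos by (intro prod_pos) auto
    have "ln (\<Prod>t<n. a t) \<le> ln (2 powr T * (\<Prod>t<n. b t))"
      using le Pa Pb by (subst ln_le_cancel_iff) auto
    also have "ln (2 powr T * (\<Prod>t<n. b t)) = T * ln 2 + (\<Sum>t<n. ln (b t))"
    proof -
      have "ln (\<Prod>t<n. b t) = (\<Sum>t<n. ln (b t))"
          using bpos by (intro ln_prod) (auto simp: less_imp_neq[symmetric] dest!: bpos)
      moreover have "ln (2 powr T * (\<Prod>t<n. b t)) = ln (2 powr T) + ln (\<Prod>t<n. b t)"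
        using Pb by (intro ln_mult_pos) auto
      moreover have "ln (2 powr T) = T * ln 2" by (simp add: ln_powr)
      ultimately show ?thesis by linarith
    qed
    also have "ln (\<Prod>t<n. a t) = (\<Sum>t<n. ln (a t))"
      using apos by (intro ln_prod) (auto simp: less_imp_neq[symmetric] dest!: apos)
    finally have key: "(\<Sum>t<n. ln (a t)) - (\<Sum>t<n. ln (b t)) \<le> T * ln 2" by simp
    have "(\<Sum>t<n. idens W (f t)) = (\<Sum>t<n. (ln (a t) - ln (b t)) / ln 2)"
    proof (intro sum.cong refl)
      fix t assume "t \<in> {..<n}"
      hence "a t > 0" "b t > 0" using apos bpos by auto
      thus "idens W (f t) = (ln (a t) - ln (b t)) / ln 2"
        unfolding idens_def a_def b_def by (simp add: case_prod_beta log_def ln_div)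
    qed
    also have "\<dots> = ((\<Sum>t<n. ln (a t)) - (\<Sum>t<n. ln (b t))) / ln 2"
      by (simp only: sum_divide_distrib[symmetric] sum_subtractf)
    also have "\<dots> \<le> T" using key by (simp add: divide_le_eq)
    finally show "f \<in> {f. (\<Sum>t<n. idens W (f t)) \<le> T}" by simp
  qed simp
  finally show ?thesis .
qed

lemma JJ_component:
  assumes "t < n"
  shows "map_pmf (\<lambda>f. f t) (JJ W n) = J1 W"
  using assms unfolding JJ_def by (subst Pi_pmf_component) auto

lemma JJ_distr:
  assumes "t < n"
  shows "distr (measure_pmf (JJ W n)) borel (\<lambda>f. idens W (f t)) = distr (measure_pmf (J1 W)) borel (idens W)"
proof -
  have "distr (measure_pmf (JJ W n)) borel (\<lambda>f. idens W (f t)) =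
        distr (measure_pmf (map_pmf (\<lambda>f. f t) (JJ W n))) borel (idens W)"
    unfolding map_pmf_rep_eq by (subst distr_distr) (auto simp: o_def)
  thus ?thesis using JJ_component[OF assms] by simp
qed

lemma hoeffding_JJ:
  assumes fin: "\<And>u. finite (set_pmf (W u))" and n: "0 < n" and ab: "a < b"
    and bnd: "\<And>z. z \<in> set_pmf (J1 W) \<Longrightarrow> idens W z \<in> {a..b}"
    and T: "T \<le> real n * measure_pmf.expectation (J1 W) (idens W)"
  shows "measure_pmf.prob (JJ W n) {f. (\<Sum>t<n. idens W (f t)) \<le> T}
         \<le> exp (-2 * (real n * measure_pmf.expectation (J1 W) (idens W) - T)\<^sup>2 / (real n * (b - a)\<^sup>2))"
proof -
  define C where "C = measure_pmf.expectation (J1 W) (idens W)"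
  interpret H: Hoeffding_ineq_iid "measure_pmf (JJ W n)" "{..<n}" "\<lambda>t f. idens W (f t)"
      "\<lambda>f. idens W (f 0)" a b C
  proof unfold_locales
    show "prob_space.indep_vars (measure_pmf (JJ W n)) (\<lambda>_. borel) (\<lambda>t f. idens W (f t)) {..<n}"
      unfolding JJ_def
      by (intro prob_space.indep_vars_compose2[OF _ indep_vars_Pi_pmf])
         (auto simp: measure_pmf.prob_space_axioms)
  next
    fix i assume "i \<in> {..<n}"
    thus "distr (measure_pmf (JJ W n)) borel (\<lambda>f. idens W (f i)) =
          distr (measure_pmf (JJ W n)) borel (\<lambda>f. idens W (f 0))"
      using JJ_distr[of i n W] JJ_distr[of 0 n W] n by simp
  next
    show "AE x in measure_pmf (JJ W n). idens W (x 0) \<in> {a..b}"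
      using n by (intro AE_pmfI bnd JJ_supp(1)) auto
  next
    have "measure_pmf.expectation (JJ W n) (\<lambda>f. idens W (f 0)) =
          measure_pmf.expectation (map_pmf (\<lambda>f. f 0) (JJ W n)) (idens W)"
      by simp
    also have "\<dots> = C" using JJ_component[OF n] by (simp add: C_def)
    finally show "C \<equiv> measure_pmf.expectation (JJ W n) (\<lambda>f. idens W (f 0))" by simp
  qed simp_all
  have "n * C - T \<ge> 0" using T by (simp add: C_def)
  moreover have "{..<n} \<noteq> {}" using n by auto
  ultimately show ?thesis using H.Hoeffding_ineq_le[of "n * C - T"] ab by (simp add: C_def)
qed

lemma bin_sum1:
  fixes p q :: real assumes "p + q = 1"
  shows "(\<Sum>d\<le>K. real (K choose d) * p ^ d * q ^ (K - d)) = 1"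
proof -
  have "(p + q) ^ K = (\<Sum>d\<le>K. real (K choose d) * p ^ d * q ^ (K - d))"
    by (rule binomial_ring)
  thus ?thesis using assms by simp
qed

lemma bin_mean:
  fixes p q :: real assumes pq: "p + q = 1"
  shows "(\<Sum>d\<le>K. real (K choose d) * p ^ d * q ^ (K - d) * real d) = real K * p"
proof (cases K)
  case 0 thus ?thesis by simp
next
  case (Suc m)
  have "(\<Sum>d\<le>Suc m. real (Suc m choose d) * p ^ d * q ^ (Suc m - d) * real d)
      = (\<Sum>j\<le>m. real (Suc m choose Suc j) * p ^ Suc j * q ^ (Suc m - Suc j) * real (Suc j))"
    by (subst sum.atMost_Suc_shift) simp
  also have "\<dots> = (\<Sum>j\<le>m. real (Suc m) * p * (real (m choose j) * p ^ j * q ^ (m - j)))"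
  proof (intro sum.cong refl)
    fix j
    have e: "real (Suc m choose Suc j) * real (Suc j) = real (Suc m) * real (m choose j)"
      using Suc_times_binomial[of j m] by (simp only: of_nat_mult[symmetric] mult.commute)
    have "real (Suc m choose Suc j) * p ^ Suc j * q ^ (Suc m - Suc j) * real (Suc j)
        = (real (Suc m choose Suc j) * real (Suc j)) * p * (p ^ j * q ^ (m - j))"
      by (simp only: power_Suc diff_Suc_Suc mult_ac)
    also have "\<dots> = (real (Suc m) * real (m choose j)) * p * (p ^ j * q ^ (m - j))"
      by (simp only: e)
    also have "\<dots> = real (Suc m) * p * (real (m choose j) * p ^ j * q ^ (m - j))"
      by (simp only: mult_ac)
    finally show "real (Suc m choose Suc j) * p ^ Suc j * q ^ (Suc m - Suc j) * real (Suc j) =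
          real (Suc m) * p * (real (m choose j) * p ^ j * q ^ (m - j))" .
  qed
  also have "\<dots> = real (Suc m) * p * (\<Sum>j\<le>m. real (m choose j) * p ^ j * q ^ (m - j))"
    by (simp only: sum_distrib_left)
  also have "\<dots> = real (Suc m) * p" using bin_sum1[OF pq, of m] by simp
  finally show ?thesis using Suc by simp
qed

lemma log_pow_mult: "0 \<le> p \<Longrightarrow> p ^ d * log 2 (p ^ d) = p ^ d * (real d * log 2 p)"
  for p :: real
proof (cases "d = 0")
  case False
  assume p0: "0 \<le> p"
  show ?thesis
  proof (cases "p = 0")
    case False
    with p0 have "p > 0" by simp
    thus ?thesis by (simp add: log_nat_power)
  qed (use False in simp)
qed simp

lemma plogp_pow_mult:
  fixes p q :: real assumes "0 \<le> p" "0 \<le> q"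
  shows "plogp (p ^ d * q ^ e) = p ^ d * q ^ e * (real d * log 2 p + real e * log 2 q)"
proof (cases "p ^ d = 0 \<or> q ^ e = 0")
  case True thus ?thesis by (auto simp: plogp_def)
next
  case False
  have "p ^ d \<ge> 0" "q ^ e \<ge> 0" using assms by simp_all
  hence pos: "p ^ d > 0" "q ^ e > 0" using False by linarith+
  have "plogp (p ^ d * q ^ e) = p ^ d * q ^ e * (log 2 (p ^ d) + log 2 (q ^ e))"
    using pos by (simp add: plogp_def log_mult)
  also have "\<dots> = q ^ e * (p ^ d * log 2 (p ^ d)) + p ^ d * (q ^ e * log 2 (q ^ e))"
    by (simp only: distrib_left mult_ac)
  also have "\<dots> = q ^ e * (p ^ d * (real d * log 2 p)) + p ^ d * (q ^ e * (real e * log 2 q))"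
    by (simp only: log_pow_mult[OF assms(1)] log_pow_mult[OF assms(2)])
  also have "\<dots> = p ^ d * q ^ e * (real d * log 2 p + real e * log 2 q)"
    by (simp only: distrib_left mult_ac)
  finally show ?thesis .
qed

lemma plogp_eq: "plogp x = x * log 2 x"
  by (simp add: plogp_def)

lemma ent_sum:
  fixes p q :: real assumes "0 \<le> p" "0 \<le> q" and pq: "p + q = 1"
  shows "(\<Sum>d\<le>K. real (K choose d) * plogp (p ^ d * q ^ (K - d))) = real K * plogp p + real K * plogp q"
proof -
  define c where "c d = real (K choose d) * p ^ d * q ^ (K - d)" for d
  have "(\<Sum>d\<le>K. real (K choose d) * plogp (p ^ d * q ^ (K - d)))
      = (\<Sum>d\<le>K. log 2 p * (c d * real d) + log 2 q * (real K * c d - c d * real d))"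
  proof (intro sum.cong refl)
    fix d assume "d \<in> {..K}"
    hence "real (K - d) = real K - real d" by (simp add: of_nat_diff)
    hence pl: "plogp (p ^ d * q ^ (K - d)) = p ^ d * q ^ (K - d) * (real d * log 2 p + (real K - real d) * log 2 q)"
      using plogp_pow_mult[OF assms(1,2), of d "K - d"] by simp
    show "real (K choose d) * plogp (p ^ d * q ^ (K - d)) =
          log 2 p * (c d * real d) + log 2 q * (real K * c d - c d * real d)"
      unfolding c_def pl by (simp add: algebra_simps)
  qed
  also have "\<dots> = log 2 p * (\<Sum>d\<le>K. c d * real d) + log 2 q * (real K * (\<Sum>d\<le>K. c d) - (\<Sum>d\<le>K. c d * real d))"
    by (simp add: sum.distrib sum_distrib_left right_diff_distrib sum_subtractf)
  also have "(\<Sum>d\<le>K. c d * real d) = real K * p" unfolding c_def by (rule bin_mean[OF pq])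
  also have "(\<Sum>d\<le>K. c d) = 1" unfolding c_def by (rule bin_sum1[OF pq])
  finally have "(\<Sum>d\<le>K. real (K choose d) * plogp (p ^ d * q ^ (K - d))) = log 2 p * (real K * p) + log 2 q * (real K * 1 - real K * p)" .
  also have "real K * 1 - real K * p = real K * q" proof -
    have "q = 1 - p" using pq by simp
    thus ?thesis by (simp add: right_diff_distrib)
  qed
  finally show ?thesis by (simp add: plogp_eq mult_ac)
qed
lemma sym_sum:
  fixes f :: "nat \<Rightarrow> real"
  assumes K: "1 \<le> K" and sym: "\<And>d. d \<le> K \<Longrightarrow> f (K - d) = f d"
  shows "(\<Sum>d\<le>K. real (K choose d) * f d) = 2 * (\<Sum>l<K. real ((K - 1) choose l) * f l)"
proof -
  obtain m where Km: "K = Suc m" using K by (cases K) auto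
  have "(\<Sum>d\<le>Suc m. real (Suc m choose d) * f d)
        = f 0 + (\<Sum>j\<le>m. real (Suc m choose Suc j) * f (Suc j))"
    by (subst sum.atMost_Suc_shift) simp
  also have "\<dots> = (f 0 + (\<Sum>j\<le>m. real (m choose Suc j) * f (Suc j))) + (\<Sum>j\<le>m. real (m choose j) * f (Suc j))"
    by (simp add: sum.distrib algebra_simps)
  also have "f 0 + (\<Sum>j\<le>m. real (m choose Suc j) * f (Suc j)) = (\<Sum>d\<le>Suc m. real (m choose d) * f d)"
    by (subst sum.atMost_Suc_shift) simp
  also have "\<dots> = (\<Sum>d\<le>m. real (m choose d) * f d)" by simp
  also have "(\<Sum>j\<le>m. real (m choose j) * f (Suc j)) = (\<Sum>j\<le>m. real (m choose (m - j)) * f (Suc (m - j)))"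
    using sum.atLeastAtMost_rev[of "\<lambda>j. real (m choose j) * f (Suc j)" 0 m] by (simp add: atLeast0AtMost)
  also have "\<dots> = (\<Sum>j\<le>m. real (m choose j) * f j)"
  proof (intro sum.cong refl)
    fix j assume j: "j \<in> {..m}"
    have "f (Suc (m - j)) = f (K - Suc (m - j))" using sym[of "Suc (m - j)"] j Km by simp
    also have "K - Suc (m - j) = j" using j Km by simp
    finally show "real (m choose (m - j)) * f (Suc (m - j)) = real (m choose j) * f j"
      using j by (simp add: binomial_symmetric[symmetric])
  qed
  finally show ?thesis using Km by (simp add: lessThan_Suc_atMost)
qed

lemma term_id:
  fixes c w v :: real assumes "c > 0" "w \<ge> 0" "v \<ge> 0"
  shows "c * w * log 2 (c * w / ((c * w + c * v) / 2)) = c * w + c * plogp w - c * w * log 2 (w + v)"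
proof (cases "w = 0")
  case True thus ?thesis by (simp add: plogp_def)
next
  case False
  hence w: "w > 0" using assms by simp
  hence wv: "w + v > 0" using assms by simp
  have "c * w / ((c * w + c * v) / 2) = c * w / (c * (w + v) / 2)" by (simp add: distrib_left)
  also have "\<dots> = 2 * w / (w + v)" using assms wv by (simp add: divide_simps)
  finally have "c * w / ((c * w + c * v) / 2) = 2 * w / (w + v)" .
  hence hL: "log 2 (c * w / ((c * w + c * v) / 2)) = 1 + log 2 w - log 2 (w + v)"
    using w wv by (simp add: log_divide log_mult)
  show ?thesis unfolding hL plogp_eq by (simp add: algebra_simps)
qed

lemma rate_formula:
  fixes p :: real assumes p: "0 \<le> p" "p \<le> 1" and K: "1 \<le> K"
  defines "q \<equiv> 1 - p"
  defines "P0 \<equiv> \<lambda>d. real (K choose d) * p ^ d * q ^ (K - d)"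
  defines "P1 \<equiv> \<lambda>d. real (K choose d) * q ^ d * p ^ (K - d)"
  shows "(\<Sum>d\<le>K. (P1 d * log 2 (P1 d / ((P1 d + P0 d) / 2)) + P0 d * log 2 (P0 d / ((P1 d + P0 d) / 2))) / 2)
         = R_coded_f K p"
proof -
  have q: "0 \<le> q" "p + q = 1" "q + p = 1" using p by (simp_all add: q_def)
  define c where "c d = real (K choose d)" for d
  define w0 where "w0 d = p ^ d * q ^ (K - d)" for d
  define w1 where "w1 d = q ^ d * p ^ (K - d)" for d
  have w0nn: "w0 d \<ge> 0" for d using p q by (simp add: w0_def)
  have w1nn: "w1 d \<ge> 0" for d using p q by (simp add: w1_def)
  have tm: "(P1 d * log 2 (P1 d / ((P1 d + P0 d) / 2)) + P0 d * log 2 (P0 d / ((P1 d + P0 d) / 2))) / 2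
        = (c d * w0 d + c d * w1 d + c d * plogp (w0 d) + c d * plogp (w1 d) - c d * plogp (w0 d + w1 d)) / 2"
    if "d \<le> K" for d
  proof -
    have c: "c d > 0" using that by (simp add: c_def)
    have e1: "P1 d = c d * w1 d" "P0 d = c d * w0 d" by (simp_all add: P1_def P0_def c_def w1_def w0_def mult.assoc)
    have t1: "P1 d * log 2 (P1 d / ((P1 d + P0 d) / 2)) = c d * w1 d + c d * plogp (w1 d) - c d * w1 d * log 2 (w1 d + w0 d)"
      unfolding e1 by (rule term_id[OF c w1nn w0nn])
    have t0: "P0 d * log 2 (P0 d / ((P1 d + P0 d) / 2)) = c d * w0 d + c d * plogp (w0 d) - c d * w0 d * log 2 (w0 d + w1 d)"
      unfolding e1 using term_id[OF c w0nn w1nn] by (simp add: add.commute)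
    have "c d * w1 d * log 2 (w1 d + w0 d) + c d * w0 d * log 2 (w0 d + w1 d) = c d * plogp (w0 d + w1 d)"
      by (simp add: plogp_eq algebra_simps)
    thus ?thesis unfolding t1 t0 by simp
  qed
  have "(\<Sum>d\<le>K. (P1 d * log 2 (P1 d / ((P1 d + P0 d) / 2)) + P0 d * log 2 (P0 d / ((P1 d + P0 d) / 2))) / 2)
      = (\<Sum>d\<le>K. (c d * w0 d + c d * w1 d + c d * plogp (w0 d) + c d * plogp (w1 d) - c d * plogp (w0 d + w1 d)) / 2)"
    using tm by (intro sum.cong refl) auto
  also have "\<dots> = ((\<Sum>d\<le>K. c d * w0 d) + (\<Sum>d\<le>K. c d * w1 d) + (\<Sum>d\<le>K. c d * plogp (w0 d))
       + (\<Sum>d\<le>K. c d * plogp (w1 d)) - (\<Sum>d\<le>K. c d * plogp (w0 d + w1 d))) / 2"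
    by (simp add: sum_divide_distrib[symmetric] sum.distrib sum_subtractf)
  also have "(\<Sum>d\<le>K. c d * w0 d) = 1"
    using bin_sum1[OF q(2), of K] by (simp add: c_def w0_def mult.assoc)
  also have "(\<Sum>d\<le>K. c d * w1 d) = 1"
    using bin_sum1[OF q(3), of K] by (simp add: c_def w1_def mult.assoc)
  also have "(\<Sum>d\<le>K. c d * plogp (w0 d)) = real K * plogp p + real K * plogp q"
    using ent_sum[OF p(1) q(1) q(2), of K] by (simp add: c_def w0_def)
  also have "(\<Sum>d\<le>K. c d * plogp (w1 d)) = real K * plogp q + real K * plogp p"
    using ent_sum[OF q(1) p(1) q(3), of K] by (simp add: c_def w1_def)
  also have "(\<Sum>d\<le>K. c d * plogp (w0 d + w1 d)) = 2 * (\<Sum>l<K. real ((K - 1) choose l) * plogp (w0 l + w1 l))"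
    unfolding c_def
  proof (rule sym_sum[OF K])
    fix d assume "d \<le> K"
    hence "w0 (K - d) + w1 (K - d) = w0 d + w1 d"
      by (simp add: w0_def w1_def ac_simps)
    thus "plogp (w0 (K - d) + w1 (K - d)) = plogp (w0 d + w1 d)" by simp
  qed
  also have "(\<Sum>l<K. real ((K - 1) choose l) * plogp (w0 l + w1 l))
      = (\<Sum>l<K. real ((K - 1) choose l) * plogp (q ^ l * p ^ (K - l) + q ^ (K - l) * p ^ l))"
    by (intro sum.cong refl) (simp add: w0_def w1_def add.commute mult.commute)
  finally have F: "(\<Sum>d\<le>K. (P1 d * log 2 (P1 d / ((P1 d + P0 d) / 2)) + P0 d * log 2 (P0 d / ((P1 d + P0 d) / 2))) / 2) =
    (1 + 1 + (real K * plogp p + real K * plogp q) + (real K * plogp q + real K * plogp p) -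
     2 * (\<Sum>l<K. real ((K - 1) choose l) * plogp (q ^ l * p ^ (K - l) + q ^ (K - l) * p ^ l))) / 2" .
  have G: "R_coded_f K p = 1 + real K * plogp p + real K * plogp q - (\<Sum>l<K. real ((K - 1) choose l) * plogp (q ^ l * p ^ (K - l) + q ^ (K - l) * p ^ l))"
    unfolding R_coded_f_def Let_def q_def by simp
  show ?thesis unfolding G F by (simp add: field_simps)
qed


definition Wb :: "nat \<Rightarrow> real \<Rightarrow> bool \<Rightarrow> nat pmf" where
  "Wb K p u = binomial_pmf K (if u then 1 - p else p)"

lemma pmf_map_Pair: "pmf (map_pmf (Pair b) M) (u,d) = (if b = u then pmf M d else 0)"
proof (cases "b = u")
  case True
  have "inj (Pair b)" by (auto intro: injI)
  thus ?thesis using True pmf_map_inj'[of "Pair b" M d] by simp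
next
  case False
  hence "(u,d) \<notin> set_pmf (map_pmf (Pair b) M)" by auto
  thus ?thesis using False by (simp add: pmf_eq_0_set_pmf)
qed

lemma pmf_J1: "pmf (J1 W) (u,d) = pmf (W u) d / 2"
  unfolding J1_def pmf_bind by (cases u) (simp_all add: pmf_map_Pair)

lemma pmf_Q1: "pmf (Q1 W) d = (pmf (W True) d + pmf (W False) d) / 2"
  unfolding Q1_def pmf_bind by simp

lemma exp_J1:
  assumes sub: "\<And>u. set_pmf (W u) \<subseteq> {..K}"
  shows "measure_pmf.expectation (J1 W) (idens W) =
    (\<Sum>d\<le>K. (pmf (W True) d * idens W (True,d) + pmf (W False) d * idens W (False,d)) / 2)"
proof -
  have "measure_pmf.expectation (J1 W) (idens W) = (\<Sum>z\<in>UNIV \<times> {..K}. idens W z * pmf (J1 W) z)"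
  proof (rule integral_measure_pmf_real)
    fix z assume "z \<in> set_pmf (J1 W)"
    thus "z \<in> UNIV \<times> {..K}" using set_J1[of "fst z" "snd z" W] sub[of "fst z"] by (auto simp: mem_Times_iff)
  qed simp
  also have "\<dots> = (\<Sum>u\<in>UNIV. \<Sum>d\<le>K. idens W (u,d) * pmf (J1 W) (u,d))"
    by (simp add: sum.cartesian_product)
  also have "\<dots> = (\<Sum>d\<le>K. idens W (True,d) * pmf (J1 W) (True,d)) + (\<Sum>d\<le>K. idens W (False,d) * pmf (J1 W) (False,d))"
    by (simp add: UNIV_bool)
  also have "\<dots> = (\<Sum>d\<le>K. pmf (W True) d * idens W (True,d) / 2) + (\<Sum>d\<le>K. pmf (W False) d * idens W (False,d) / 2)"
    by (simp add: pmf_J1 mult.commute)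
  also have "\<dots> = (\<Sum>d\<le>K. pmf (W True) d * idens W (True,d) / 2 + pmf (W False) d * idens W (False,d) / 2)"
    by (rule sum.distrib[symmetric])
  also have "\<dots> = (\<Sum>d\<le>K. (pmf (W True) d * idens W (True,d) + pmf (W False) d * idens W (False,d)) / 2)"
    by (simp add: add_divide_distrib)
  finally show ?thesis .
qed

lemma set_Wb: "0 \<le> p \<Longrightarrow> p \<le> 1 \<Longrightarrow> set_pmf (Wb K p u) \<subseteq> {..K}"
  unfolding Wb_def by (auto simp: set_pmf_binomial_eq split: if_splits)

lemma capacity:
  assumes p: "0 \<le> p" "p \<le> 1" and K: "1 \<le> K"
  shows "measure_pmf.expectation (J1 (Wb K p)) (idens (Wb K p)) = R_coded_f K p"
proof -
  have pp: "1 - p \<in> {0..1}" "p \<in> {0..1}" using p by auto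
  have "measure_pmf.expectation (J1 (Wb K p)) (idens (Wb K p)) =
    (\<Sum>d\<le>K. (pmf (Wb K p True) d * idens (Wb K p) (True,d) + pmf (Wb K p False) d * idens (Wb K p) (False,d)) / 2)"
    by (rule exp_J1[OF set_Wb[OF p]])
  also have "\<dots> = R_coded_f K p"
    using rate_formula[OF p K] pp by (simp add: idens_def pmf_Q1 Wb_def)
  finally show ?thesis .
qed

lemma bern_xor:
  fixes x y :: real assumes "0 \<le> x" "x \<le> 1" "0 \<le> y" "y \<le> 1"
  shows "map_pmf (\<lambda>(a,b). a \<noteq> b) (pair_pmf (bernoulli_pmf x) (bernoulli_pmf y))
         = bernoulli_pmf (x * (1 - y) + (1 - x) * y)"
proof (rule pmf_eqI)
  fix c :: bool
  have r1: "0 \<le> x * (1 - y) + (1 - x) * y" using assms by simp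
  have s: "x * (1 - y) + (1 - x) * y + ((1 - x) * (1 - y) + x * y) = 1" by (simp add: algebra_simps)
  have "0 \<le> (1 - x) * (1 - y) + x * y" using assms by simp
  hence r2: "x * (1 - y) + (1 - x) * y \<le> 1" using s by linarith
  note r = r1 r2
  have pre: "(\<lambda>(a,b). a \<noteq> b) -` {c} = (if c then {(True,False),(False,True)} else {(True,True),(False,False)})"
    by (cases c) auto
  show "pmf (map_pmf (\<lambda>(a,b). a \<noteq> b) (pair_pmf (bernoulli_pmf x) (bernoulli_pmf y))) c
        = pmf (bernoulli_pmf (x * (1 - y) + (1 - x) * y)) c"
    unfolding pmf_map pre using assms r
    by (cases c) (simp_all add: measure_measure_pmf_finite pmf_pair algebra_simps)
qed

lemma map_pair_bind: "map_pmf F (pair_pmf M N) = bind_pmf M (\<lambda>x. map_pmf (\<lambda>y. F (x,y)) N)"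
  unfolding pair_pmf_def map_pmf_def by (simp add: bind_assoc_pmf bind_return_pmf)

lemma Pi_pmf_pair_map:
  assumes "finite A"
  shows "map_pmf (\<lambda>(f,g) j. if j \<in> A then h (f j) (g j) else d) (pair_pmf (Pi_pmf A d1 P) (Pi_pmf A d2 Q))
       = Pi_pmf A d (\<lambda>j. map_pmf (\<lambda>(a,b). h a b) (pair_pmf (P j) (Q j)))"
proof -
  have "Pi_pmf A d (\<lambda>j. map_pmf (\<lambda>(a,b). h a b) (pair_pmf (P j) (Q j)))
      = Pi_pmf A d (\<lambda>j. bind_pmf (P j) (\<lambda>a. map_pmf (h a) (Q j)))"
    by (simp add: map_pair_bind)
  also have "\<dots> = bind_pmf (Pi_pmf A d1 P) (\<lambda>f. Pi_pmf A d (\<lambda>j. map_pmf (h (f j)) (Q j)))"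
    using assms by (rule Pi_pmf_bind)
  also have "\<dots> = bind_pmf (Pi_pmf A d1 P) (\<lambda>f. map_pmf (\<lambda>g j. if j \<in> A then h (f j) (g j) else d) (Pi_pmf A d2 Q))"
    using assms by (subst Pi_pmf_map_dep) auto
  also have "\<dots> = map_pmf (\<lambda>(f,g) j. if j \<in> A then h (f j) (g j) else d) (pair_pmf (Pi_pmf A d1 P) (Pi_pmf A d2 Q))"
    by (simp add: map_pair_bind)
  finally show ?thesis by (rule sym)
qed

lemma inj_curry2: "inj (\<lambda>(f :: 'a \<times> 'b \<Rightarrow> 'c) a b. f (a,b))"
proof (rule injI)
  fix f f' :: "'a \<times> 'b \<Rightarrow> 'c" assume h: "(\<lambda>a b. f (a,b)) = (\<lambda>a b. f' (a,b))"
  show "f = f'"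
  proof (rule ext)
    fix x show "f x = f' x"
    proof (cases x)
      case (Pair a b) thus ?thesis using fun_cong[OF fun_cong[OF h, of a], of b] by simp
    qed
  qed
qed

lemma Pi_pmf_curry:
  assumes A: "finite A" and B: "finite B"
  shows "map_pmf (\<lambda>f a b. f (a,b)) (Pi_pmf (A \<times> B) d (\<lambda>_. P)) = Pi_pmf A (\<lambda>_. d) (\<lambda>_. Pi_pmf B d (\<lambda>_. P))"
proof (rule pmf_eqI)
  fix g :: "'a \<Rightarrow> 'b \<Rightarrow> 'c"
  have inj: "inj (\<lambda>f a b. f (a,b))" by (rule inj_curry2)
  have "pmf (map_pmf (\<lambda>f a b. f (a,b)) (Pi_pmf (A \<times> B) d (\<lambda>_. P))) ((\<lambda>f a b. f (a,b)) (case_prod g))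
        = pmf (Pi_pmf (A \<times> B) d (\<lambda>_. P)) (case_prod g)"
    by (rule pmf_map_inj'[OF inj])
  hence L: "pmf (map_pmf (\<lambda>f a b. f (a,b)) (Pi_pmf (A \<times> B) d (\<lambda>_. P))) g
        = pmf (Pi_pmf (A \<times> B) d (\<lambda>_. P)) (case_prod g)" by simp
  show "pmf (map_pmf (\<lambda>f a b. f (a,b)) (Pi_pmf (A \<times> B) d (\<lambda>_. P))) g = pmf (Pi_pmf A (\<lambda>_. d) (\<lambda>_. Pi_pmf B d (\<lambda>_. P))) g"
  proof (cases "\<forall>x. x \<notin> A \<times> B \<longrightarrow> case_prod g x = d")
    case True
    hence o: "\<forall>a. a \<notin> A \<longrightarrow> g a = (\<lambda>_. d)" and i: "\<And>a b. b \<notin> B \<Longrightarrow> g a b = d"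
      by (auto simp: fun_eq_iff)
    have "pmf (Pi_pmf (A \<times> B) d (\<lambda>_. P)) (case_prod g) = (\<Prod>x\<in>A \<times> B. pmf P (case_prod g x))"
      using True A B by (simp add: pmf_Pi)
    also have "\<dots> = (\<Prod>a\<in>A. \<Prod>b\<in>B. pmf P (g a b))"
      by (simp add: prod.cartesian_product split_def)
    also have "\<dots> = (\<Prod>a\<in>A. pmf (Pi_pmf B d (\<lambda>_. P)) (g a))"
      using B i by (intro prod.cong refl) (simp add: pmf_Pi)
    also have "\<dots> = pmf (Pi_pmf A (\<lambda>_. d) (\<lambda>_. Pi_pmf B d (\<lambda>_. P))) g"
      using A o by (simp add: pmf_Pi)
    finally show ?thesis using L by simp
  next
    case False
    then obtain a b where ab: "(a,b) \<notin> A \<times> B" "g a b \<noteq> d" by auto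
    have "pmf (Pi_pmf (A \<times> B) d (\<lambda>_. P)) (case_prod g) = 0"
      by (subst pmf_Pi[OF finite_cartesian_product[OF A B]], rule if_not_P[OF False])
    moreover have "pmf (Pi_pmf A (\<lambda>_. d) (\<lambda>_. Pi_pmf B d (\<lambda>_. P))) g = 0"
    proof (cases "a \<in> A")
      case False
      hence "g a \<noteq> (\<lambda>_. d)" using ab by (auto simp: fun_eq_iff)
      thus ?thesis using A False by (subst pmf_Pi) auto
    next
      case True
      hence "b \<notin> B" using ab by auto
      hence "pmf (Pi_pmf B d (\<lambda>_. P)) (g a) = 0" using B ab by (subst pmf_Pi) auto
      hence "(\<Prod>a\<in>A. pmf (Pi_pmf B d (\<lambda>_. P)) (g a)) = 0" using A True by (subst prod_zero_iff) auto
      thus ?thesis using A by (simp add: pmf_Pi)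
    qed
    ultimately show ?thesis using L by simp
  qed
qed

lemma bern_Not: "0 \<le> p \<Longrightarrow> p \<le> 1 \<Longrightarrow> map_pmf Not (bernoulli_pmf p) = bernoulli_pmf (1 - p)"
proof (rule pmf_eqI)
  fix b :: bool assume "0 \<le> p" "p \<le> 1"
  have "pmf (map_pmf Not (bernoulli_pmf p)) (Not (\<not> b)) = pmf (bernoulli_pmf p) (\<not> b)"
    by (rule pmf_map_inj') (auto intro: injI)
  thus "pmf (map_pmf Not (bernoulli_pmf p)) b = pmf (bernoulli_pmf (1 - p)) b"
    using \<open>0 \<le> p\<close> \<open>p \<le> 1\<close> by (cases b) simp_all
qed

lemma count_component:
  assumes "0 \<le> p" "p \<le> 1"
  shows "map_pmf (\<lambda>h. card {i\<in>{..<K}. u \<noteq> h i}) (Pi_pmf {..<K} False (\<lambda>_. bernoulli_pmf p)) = Wb K p u"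
proof (cases u)
  case False
  thus ?thesis using assms
    by (simp add: Wb_def binomial_pmf_altdef'[of "{..<K}" K p False])
next
  case True
  have "Pi_pmf {..<K} True (\<lambda>_. bernoulli_pmf (1 - p)) = Pi_pmf {..<K} True (\<lambda>_. map_pmf Not (bernoulli_pmf p))"
    using assms by (simp add: bern_Not)
  also have "\<dots> = map_pmf (\<lambda>h. Not \<circ> h) (Pi_pmf {..<K} False (\<lambda>_. bernoulli_pmf p))"
    by (rule Pi_pmf_map) auto
  finally have e: "map_pmf (\<lambda>h. Not \<circ> h) (Pi_pmf {..<K} False (\<lambda>_. bernoulli_pmf p)) = Pi_pmf {..<K} True (\<lambda>_. bernoulli_pmf (1 - p))" ..
  have "map_pmf (\<lambda>h. card {i\<in>{..<K}. u \<noteq> h i}) (Pi_pmf {..<K} False (\<lambda>_. bernoulli_pmf p))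
      = map_pmf (\<lambda>f. card {i\<in>{..<K}. f i}) (map_pmf (\<lambda>h. Not \<circ> h) (Pi_pmf {..<K} False (\<lambda>_. bernoulli_pmf p)))"
    using True by (simp add: pmf.map_comp o_def)
  also have "\<dots> = binomial_pmf K (1 - p)"
    unfolding e using binomial_pmf_altdef'[of "{..<K}" K "1 - p" True] assms by simp
  finally show ?thesis using True by (simp add: Wb_def)
qed

definition stat :: "nat \<Rightarrow> nat \<Rightarrow> (nat \<times> nat \<Rightarrow> bool) \<Rightarrow> nat \<Rightarrow> nat" where
  "stat n K Y = (\<lambda>t. if t < n then card {i\<in>{..<K}. Y (Suc t, i)} else 0)"

lemma channel_eq:
  assumes ps: "0 \<le> ps" "ps \<le> 1" and pd: "0 \<le> pd" "pd \<le> 1"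
  shows "map_pmf (\<lambda>(z,e). stat n K (fwd_output n K enc w z e)) (pair_pmf (noise_pmf n K ps) (noise_pmf n K pd))
         = Vn (Wb K (ps * (1 - pd) + (1 - ps) * pd)) n (enc w)"
proof -
  define p where "p = ps * (1 - pd) + (1 - ps) * pd"
  have p: "0 \<le> p" "p \<le> 1"
  proof -
    show "0 \<le> p" using ps pd by (simp add: p_def)
    have s: "p + ((1 - ps) * (1 - pd) + ps * pd) = 1" by (simp add: p_def algebra_simps)
    have "0 \<le> (1 - ps) * (1 - pd) + ps * pd" using ps pd by simp
    thus "p \<le> 1" using s by linarith
  qed
  define A where "A = {..<n} \<times> {..<K}"
  define Full where "Full = {..n} \<times> {..<K}"
  define \<sigma> where "\<sigma> = (\<lambda>(t::nat,i::nat). (Suc t, i))"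
  define Bs where "Bs = \<sigma> ` A"
  define restr where "restr = (\<lambda>(z::nat\<times>nat\<Rightarrow>bool) j. if j \<in> A then z j else False)"
  define shift where "shift = (\<lambda>(e::nat\<times>nat\<Rightarrow>bool) j. if j \<in> A then e (\<sigma> j) else False)"
  define comb where "comb = (\<lambda>(f::nat\<times>nat\<Rightarrow>bool, g::nat\<times>nat\<Rightarrow>bool) j. if j \<in> A then f j \<noteq> g j else False)"
  have finA: "finite A" "finite Full" by (simp_all add: A_def Full_def)
  have AF: "A \<subseteq> Full" by (auto simp: A_def Full_def)
  have injs: "inj \<sigma>" by (auto simp: \<sigma>_def inj_def)
  have BF: "Bs \<subseteq> Full" by (auto simp: Bs_def A_def Full_def \<sigma>_def)
  have N1: "map_pmf restr (noise_pmf n K ps) = Pi_pmf A False (\<lambda>_. bernoulli_pmf ps)"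
    unfolding noise_pmf_def restr_def Full_def[symmetric]
    by (rule Pi_pmf_subset[OF finA(2) AF, symmetric])
  have N2: "map_pmf shift (noise_pmf n K pd) = Pi_pmf A False (\<lambda>_. bernoulli_pmf pd)"
  proof -
    have "Pi_pmf A False (\<lambda>_. bernoulli_pmf pd) = map_pmf (\<lambda>g. g \<circ> \<sigma>) (Pi_pmf Bs False (\<lambda>_. bernoulli_pmf pd))"
    proof (rule Pi_pmf_bij_betw[OF finA(1)])
      show "bij_betw \<sigma> A Bs" unfolding Bs_def using injs by (auto intro: bij_betw_imageI inj_on_subset)
      fix x assume "x \<notin> A" thus "\<sigma> x \<notin> Bs" using injs by (simp add: Bs_def inj_image_mem_iff)
    qed
    also have "Pi_pmf Bs False (\<lambda>_. bernoulli_pmf pd) = map_pmf (\<lambda>f x. if x \<in> Bs then f x else False) (noise_pmf n K pd)"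
      unfolding noise_pmf_def Full_def[symmetric] by (rule Pi_pmf_subset[OF finA(2) BF])
    also have "map_pmf (\<lambda>g. g \<circ> \<sigma>) (map_pmf (\<lambda>f x. if x \<in> Bs then f x else False) (noise_pmf n K pd))
        = map_pmf shift (noise_pmf n K pd)"
      unfolding pmf.map_comp
    proof (intro map_pmf_cong refl)
      fix e
      have "\<sigma> j \<in> Bs \<longleftrightarrow> j \<in> A" for j using injs by (simp add: Bs_def inj_image_mem_iff)
      thus "((\<lambda>g. g \<circ> \<sigma>) \<circ> (\<lambda>f x. if x \<in> Bs then f x else False)) e = shift e"
        by (auto simp: shift_def fun_eq_iff)
    qed
    finally show ?thesis ..
  qed
  have G: "map_pmf (comb \<circ> (\<lambda>(z,e). (restr z, shift e))) (pair_pmf (noise_pmf n K ps) (noise_pmf n K pd))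
      = Pi_pmf A False (\<lambda>_. bernoulli_pmf p)"
  proof -
    have "map_pmf (comb \<circ> (\<lambda>(z,e). (restr z, shift e))) (pair_pmf (noise_pmf n K ps) (noise_pmf n K pd))
        = map_pmf comb (pair_pmf (map_pmf restr (noise_pmf n K ps)) (map_pmf shift (noise_pmf n K pd)))"
      by (simp add: map_pair[symmetric] pmf.map_comp)
    also have "\<dots> = Pi_pmf A False (\<lambda>j. map_pmf (\<lambda>(a,b). a \<noteq> b) (pair_pmf (bernoulli_pmf ps) (bernoulli_pmf pd)))"
      unfolding N1 N2 comb_def by (rule Pi_pmf_pair_map[OF finA(1)])
    also have "\<dots> = Pi_pmf A False (\<lambda>_. bernoulli_pmf p)"
      using bern_xor[OF ps pd] by (simp add: p_def)
    finally show ?thesis .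
  qed
  define F2 where "F2 = (\<lambda>(H::nat \<Rightarrow> nat \<Rightarrow> bool) t. if t \<in> {..<n} then card {i\<in>{..<K}. enc w t \<noteq> H t i} else (0::nat))"
  have V: "Vn (Wb K p) n (enc w) = map_pmf F2 (map_pmf (\<lambda>f a b. f (a,b)) (Pi_pmf A False (\<lambda>_. bernoulli_pmf p)))"
  proof -
    have "Vn (Wb K p) n (enc w) = Pi_pmf {..<n} 0 (\<lambda>t. map_pmf (\<lambda>h. card {i\<in>{..<K}. enc w t \<noteq> h i}) (Pi_pmf {..<K} False (\<lambda>_. bernoulli_pmf p)))"
      unfolding Vn_def using count_component[OF p] by simp
    also have "\<dots> = map_pmf F2 (Pi_pmf {..<n} (\<lambda>_. False) (\<lambda>_. Pi_pmf {..<K} False (\<lambda>_. bernoulli_pmf p)))"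
      unfolding F2_def by (rule Pi_pmf_map_dep) simp
    also have "Pi_pmf {..<n} (\<lambda>_. False) (\<lambda>_. Pi_pmf {..<K} False (\<lambda>_. bernoulli_pmf p))
        = map_pmf (\<lambda>f a b. f (a,b)) (Pi_pmf A False (\<lambda>_. bernoulli_pmf p))"
      unfolding A_def by (rule Pi_pmf_curry[symmetric]) simp_all
    finally show ?thesis .
  qed
  have pt: "(F2 \<circ> (\<lambda>f a b. f (a,b)) \<circ> (comb \<circ> (\<lambda>(z,e). (restr z, shift e)))) ze = (\<lambda>(z,e). stat n K (fwd_output n K enc w z e)) ze" for ze
  proof (cases ze)
    case (Pair z e)
    have "F2 (\<lambda>a b. comb (restr z, shift e) (a,b)) t = stat n K (fwd_output n K enc w z e) t" for t
    proof (cases "t < n")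
      case True
      have "{i\<in>{..<K}. enc w t \<noteq> comb (restr z, shift e) (t,i)} = {i\<in>{..<K}. fwd_output n K enc w z e (Suc t, i)}"
        using True by (auto simp: comb_def restr_def shift_def A_def \<sigma>_def fwd_output_def)
      thus ?thesis using True by (simp add: F2_def stat_def)
    next
      case False thus ?thesis by (simp add: F2_def stat_def)
    qed
    thus ?thesis using Pair by (simp add: fun_eq_iff)
  qed
  have "map_pmf (\<lambda>(z,e). stat n K (fwd_output n K enc w z e)) (pair_pmf (noise_pmf n K ps) (noise_pmf n K pd))
      = map_pmf (F2 \<circ> (\<lambda>f a b. f (a,b)) \<circ> (comb \<circ> (\<lambda>(z,e). (restr z, shift e)))) (pair_pmf (noise_pmf n K ps) (noise_pmf n K pd))"
    using pt by (intro map_pmf_cong refl) simp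
  also have "\<dots> = map_pmf F2 (map_pmf (\<lambda>f a b. f (a,b)) (map_pmf (comb \<circ> (\<lambda>(z,e). (restr z, shift e))) (pair_pmf (noise_pmf n K ps) (noise_pmf n K pd))))"
    by (simp add: pmf.map_comp o_assoc)
  also have "\<dots> = Vn (Wb K p) n (enc w)" unfolding G V ..
  finally show ?thesis by (simp add: p_def)
qed

lemma aux_eq: fixes x d y :: real assumes "x \<noteq> 0" "y \<noteq> 0"
  shows "-2 * (x * d)^2 / (x * y) = - (x * (2 * d^2 / y))"
  using assms by (simp add: power2_eq_square field_simps)

lemma abs_in_range: fixes x M0 :: real shows "\<bar>x\<bar> \<le> M0 \<Longrightarrow> x \<in> {-M0 - 1..M0 + 1}"
  by (simp only: atLeastAtMost_iff abs_le_iff) linarith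

lemma idens_bounds:
  assumes fin: "finite (set_pmf (J1 W))"
  obtains a b where "a < b" "\<And>z. z \<in> set_pmf (J1 W) \<Longrightarrow> idens W z \<in> {a..b}"
proof -
  define M0 where "M0 = (\<Sum>z\<in>set_pmf (J1 W). \<bar>idens W z\<bar>)"
  have "\<bar>idens W z\<bar> \<le> M0" if "z \<in> set_pmf (J1 W)" for z
    unfolding M0_def using fin that by (intro member_le_sum) auto
  hence "idens W z \<in> {-M0 - 1..M0 + 1}" if "z \<in> set_pmf (J1 W)" for z
    using abs_in_range[of "idens W z" M0] that by blast
  moreover have "-M0 - 1 < M0 + 1"
  proof -
    have "M0 \<ge> 0" unfolding M0_def by (intro sum_nonneg) auto
    thus ?thesis by linarith
  qed
  ultimately show ?thesis using that by blast
qed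

lemma ceil_ge: "x \<le> real (nat \<lceil>x\<rceil>)"
  by linarith

theorem corollary1:
  fixes K :: nat and ps pd R :: real
  assumes "1 \<le> K"
    and "0 \<le> ps" and "ps < 1/2" and "0 \<le> pd" and "pd < 1/2"
    and "R < R_coded_f K (ps * (1 - pd) + (1 - ps) * pd)"
  shows "fwd_coded_achievable K ps pd R"
  unfolding fwd_coded_achievable_def
proof (intro allI impI)
  fix \<epsilon> :: real and N :: nat assume \<epsilon>0: "\<epsilon> > 0"
  define p where "p = ps * (1 - pd) + (1 - ps) * pd"
  have ps1: "ps \<le> 1" and pd1: "pd \<le> 1" using assms by simp_all
  have p: "0 \<le> p" "p \<le> 1"
  proof -
    show "0 \<le> p" using assms by (simp add: p_def)
    have s: "p + ((1 - ps) * (1 - pd) + ps * pd) = 1" by (simp add: p_def algebra_simps)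
    have "0 \<le> (1 - ps) * (1 - pd) + ps * pd" using assms by simp
    thus "p \<le> 1" using s by linarith
  qed
  define W where "W = Wb K p"
  define C where "C = measure_pmf.expectation (J1 W) (idens W)"
  have C: "C = R_coded_f K p" unfolding C_def W_def by (rule capacity[OF p assms(1)])
  have RC: "R < C" using assms(6) C by (simp add: p_def)
  have finW: "finite (set_pmf (W u))" for u
    unfolding W_def by (rule finite_subset[OF set_Wb[OF p]]) simp
  have finJ: "finite (set_pmf (J1 W))"
  proof (rule finite_subset)
    show "set_pmf (J1 W) \<subseteq> UNIV \<times> {..K}"
      using set_J1[of _ _ W] set_Wb[OF p] unfolding W_def by (force simp: mem_Times_iff)
  qed simp
  obtain a b where ab: "a < b" and bnd: "\<And>z. z \<in> set_pmf (J1 W) \<Longrightarrow> idens W z \<in> {a..b}"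
    using idens_bounds[OF finJ] by blast
  define \<epsilon>' where "\<epsilon>' = min \<epsilon> (1/2)"
  have e': "0 < \<epsilon>'" "\<epsilon>' < 1" "\<epsilon>' \<le> \<epsilon>" using \<epsilon>0 by (auto simp: \<epsilon>'_def)
  define R' where "R' = (R + C) / 2"
  define \<delta> where "\<delta> = (C - R) / 2"
  have \<delta>: "\<delta> > 0" "C - R' = \<delta>" "R' - R = \<delta>" using RC by (auto simp: \<delta>_def R'_def field_simps)
  define k where "k = 2 * \<delta>^2 / (b - a)^2"
  have k: "k > 0" using \<delta> ab by (simp add: k_def)
  define n1 where "n1 = ln (2 / \<epsilon>') / k"
  define n2 where "n2 = (R - log 2 (\<epsilon>' / 2)) / \<delta>"
  define n where "n = max N 1 + nat \<lceil>n1\<rceil> + nat \<lceil>n2\<rceil>"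
  have nN: "N \<le> n" and n0: "0 < n" by (auto simp: n_def)
  have nn1: "n1 \<le> real n" using ceil_ge[of n1] by (simp add: n_def)
  have nn2: "n2 \<le> real n" using ceil_ge[of n2] by (simp add: n_def)
  define T where "T = real n * R'"
  have hexp: "exp (-2 * (real n * C - T)\<^sup>2 / (real n * (b - a)\<^sup>2)) \<le> \<epsilon>' / 2"
  proof -
    have eq: "-2 * (real n * C - T)\<^sup>2 / (real n * (b - a)\<^sup>2) = - (real n * k)"
    proof -
      have "real n * C - T = real n * \<delta>" using \<delta>(2) by (simp add: T_def algebra_simps)
      hence "-2 * (real n * C - T)\<^sup>2 / (real n * (b - a)\<^sup>2) = -2 * (real n * \<delta>)\<^sup>2 / (real n * (b - a)\<^sup>2)"
        by (simp only:)
      also have "\<dots> = - (real n * k)" unfolding k_def using n0 ab by (intro aux_eq) auto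
      finally show ?thesis .
    qed
    have "ln (2 / \<epsilon>') \<le> real n * k" using nn1 k by (simp add: n1_def pos_divide_le_eq mult.commute)
    hence "exp (- (real n * k)) \<le> exp (- ln (2 / \<epsilon>'))" by simp
    also have "exp (- ln (2 / \<epsilon>')) = \<epsilon>' / 2" using e' by (simp add: exp_minus)
    finally show ?thesis unfolding eq .
  qed
  have abound: "(\<Sum>x\<in>set_pmf (Pn n). pmf (Pn n) x * measure_pmf.prob (Vn W n x) (- Bset W n T x)) \<le> \<epsilon>' / 2"
  proof -
    have "R' \<le> C" using \<delta> by linarith
    hence TC: "T \<le> real n * C" by (simp add: T_def mult_left_mono)
    have "(\<Sum>x\<in>set_pmf (Pn n). pmf (Pn n) x * measure_pmf.prob (Vn W n x) (- Bset W n T x))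
        \<le> measure_pmf.prob (JJ W n) {f. (\<Sum>t<n. idens W (f t)) \<le> T}"
      by (rule a_bound[OF finW])
    also have "\<dots> \<le> exp (-2 * (real n * C - T)\<^sup>2 / (real n * (b - a)\<^sup>2))"
      unfolding C_def by (rule hoeffding_JJ[OF finW n0 ab bnd TC[unfolded C_def]])
    also have "\<dots> \<le> \<epsilon>' / 2" by (rule hexp)
    finally show ?thesis .
  qed
  obtain xs dec where fe1: "\<epsilon>' - (\<Sum>x\<in>set_pmf (Pn n). pmf (Pn n) x * measure_pmf.prob (Vn W n x) (- Bset W n T x))
          \<le> real (length xs) * 2 powr (-T)"
    and fe2: "\<And>j. j < length xs \<Longrightarrow> measure_pmf.prob (Vn W n (xs!j)) {y. dec y \<noteq> j} \<le> \<epsilon>'"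
  proof -
    have "\<exists>xs dec. \<epsilon>' - (\<Sum>x\<in>set_pmf (Pn n). pmf (Pn n) x * measure_pmf.prob (Vn W n x) (- Bset W n T x))
          \<le> real (length xs) * 2 powr (-T) \<and> (\<forall>j<length xs. measure_pmf.prob (Vn W n (xs!j)) {y. dec y \<noteq> j} \<le> \<epsilon>')"
      by (rule feinstein[OF finite_set_Vn(2)[OF finW] finite_set_Vn(1)[OF finW] finite_set_Pn Bset_prob[OF finW] e'(1,2)])
    thus ?thesis using that by blast
  qed
  define M where "M = length xs"
  have Mlow: "\<epsilon>' / 2 * 2 powr T \<le> real M"
  proof -
    have "\<epsilon>' / 2 \<le> real M * 2 powr (-T)" using fe1 abound by (simp add: M_def)
    hence "\<epsilon>' / 2 * 2 powr T \<le> real M * 2 powr (-T) * 2 powr T" by (simp add: mult_right_mono)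
    also have "\<dots> = real M" by (simp add: powr_add[symmetric] mult.assoc)
    finally show ?thesis .
  qed
  have rate_ineq: "2 powr (real (n + 1) * R) \<le> \<epsilon>' / 2 * 2 powr T"
  proof -
    have "R - log 2 (\<epsilon>' / 2) \<le> real n * \<delta>" using nn2 \<delta>(1) by (simp add: n2_def pos_divide_le_eq mult.commute)
    hence "real (n + 1) * R \<le> log 2 (\<epsilon>' / 2) + T" using \<delta>(3) by (simp add: T_def algebra_simps)
    hence "2 powr (real (n + 1) * R) \<le> 2 powr (log 2 (\<epsilon>' / 2) + T)" by simp
    also have "\<dots> = \<epsilon>' / 2 * 2 powr T" using e' by (simp add: powr_add)
    finally show ?thesis .
  qed
  have Mge: "2 powr (real (n + 1) * R) \<le> real M" using rate_ineq Mlow by linarith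
  have M1: "1 \<le> M"
  proof -
    have "0 < 2 powr (real (n + 1) * R)" by simp
    hence "0 < real M" using Mge by linarith
    thus ?thesis by simp
  qed
  have rateR: "R \<le> log 2 (real M) / real (n + 1)"
  proof -
    have "log 2 (2 powr (real (n + 1) * R)) \<le> log 2 (real M)"
      using Mge M1 by (subst log_le_cancel_iff) auto
    hence "real (n + 1) * R \<le> log 2 (real M)" by simp
    thus ?thesis by (simp add: pos_le_divide_eq mult.commute)
  qed
  define enc where "enc = (\<lambda>w. xs ! w)"
  define decF where "decF = (\<lambda>Y. dec (stat n K Y))"
  have err: "fwd_avg_error n K ps pd M enc decF \<le> \<epsilon>"
  proof -
    have each: "measure_pmf.prob (pair_pmf (noise_pmf n K ps) (noise_pmf n K pd))
                {(z, e). decF (fwd_output n K enc w z e) \<noteq> w} \<le> \<epsilon>'" if w: "w < M" for w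
    proof -
      have "{(z, e). decF (fwd_output n K enc w z e) \<noteq> w}
          = (\<lambda>(z,e). stat n K (fwd_output n K enc w z e)) -` {y. dec y \<noteq> w}"
        by (auto simp: decF_def)
      hence "measure_pmf.prob (pair_pmf (noise_pmf n K ps) (noise_pmf n K pd))
                {(z, e). decF (fwd_output n K enc w z e) \<noteq> w}
           = measure_pmf.prob (map_pmf (\<lambda>(z,e). stat n K (fwd_output n K enc w z e))
                (pair_pmf (noise_pmf n K ps) (noise_pmf n K pd))) {y. dec y \<noteq> w}"
        by (simp add: measure_map_pmf)
      also have "\<dots> = measure_pmf.prob (Vn W n (xs ! w)) {y. dec y \<noteq> w}"
        unfolding channel_eq[OF assms(2) ps1 assms(4) pd1] W_def p_def enc_def ..
      also have "\<dots> \<le> \<epsilon>'" using fe2 w by (simp add: M_def)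
      finally show ?thesis .
    qed
    have "fwd_avg_error n K ps pd M enc decF \<le> (\<Sum>w<M. \<epsilon>') / real M"
      unfolding fwd_avg_error_def using M1 by (intro divide_right_mono sum_mono each) auto
    also have "\<dots> = \<epsilon>'" using M1 by simp
    finally show ?thesis using e' by simp
  qed
  show "\<exists>n M enc dec. N \<le> n \<and> 1 \<le> M \<and> R \<le> log 2 (real M) / real (n + 1) \<and> fwd_avg_error n K ps pd M enc dec \<le> \<epsilon>"
    using nN M1 rateR err by blast
qed


end
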